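(* For $\nu>0$ define $f_\nu(x)=(1-x^2)^\nu$ for $|x|<1$ and $f_\nu(x)=0$ otherwise; for $X>0$ define $$g_{\nu,X}(x)=\frac{\Gamma(\frac32+2\nu)}{\sqrt\pi\,\Gamma(1+2\nu)}\int_{\mathbb{R}}f_\nu(y)f_\nu\!\left(\frac{2x}{X}-y\right)dy\quad(x\ge0),$$ and $h_{\nu,X}(t)=2\int_0^\infty g_{\nu,X}(x)\cos(tx)\,dx$. Then $g_{\nu,X}(0)=1$, $g_{\nu,X}$ is supported on $[0,X]$, $h_{\nu,X}$ is non-negative, and for any fixed $\varepsilon>0$, $$h_{\nu,X}(t)\ll_\varepsilon\nu^{-1/2}e^{-2\nu}X\left|\frac{4\nu}{Xt}\right|^{2\nu+2}$$ uniformly for $\left|\frac{Xt}{4}\right|\ge\nu\ge\varepsilon$. *)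

theory Defs
  imports "HOL-Analysis.Analysis"
begin

definition f_nu :: "real \<Rightarrow> real \<Rightarrow> real" where
  "f_nu \<nu> x = (if \<bar>x\<bar> < 1 then (1 - x\<^sup>2) powr \<nu> else 0)"

text \<open>g is only used for x >= 0 (the formula is evaluated for all real x).\<close>
definition g_nu :: "real \<Rightarrow> real \<Rightarrow> real \<Rightarrow> real" where
  "g_nu \<nu> X x = Gamma (3/2 + 2*\<nu>) / (sqrt pi * Gamma (1 + 2*\<nu>)) *
     (LINT y|lborel. f_nu \<nu> y * f_nu \<nu> (2*x/X - y))"

definition h_nu :: "real \<Rightarrow> real \<Rightarrow> real \<Rightarrow> real" where
  "h_nu \<nu> X t = 2 * (LBINT x:{0..}. g_nu \<nu> X x * cos (t*x))"

end

theory Submission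
  imports Defs "HOL-Complex_Analysis.Complex_Analysis"
begin


lemma f_nonneg: "0 \<le> f_nu \<nu> y"
  by (simp add: f_nu_def)

lemma f_le1: "\<nu> > 0 \<Longrightarrow> f_nu \<nu> y \<le> 1"
proof -
  assume "\<nu> > 0"
  show ?thesis
  proof (cases "\<bar>y\<bar> < 1")
    case True
    have "0 \<le> 1 - y\<^sup>2" "1 - y\<^sup>2 \<le> 1" using True by (auto simp: abs_square_less_1 less_imp_le)
    then have "(1 - y\<^sup>2) powr \<nu> \<le> 1" using \<open>\<nu>>0\<close> by (simp add: powr_le1)
    then show ?thesis using True by (simp add: f_nu_def)
  qed (simp add: f_nu_def)
qed

lemma f_zero: "\<bar>y\<bar> \<ge> 1 \<Longrightarrow> f_nu \<nu> y = 0"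
  by (simp add: f_nu_def)

lemma f_even: "f_nu \<nu> (-y) = f_nu \<nu> y"
  by (simp add: f_nu_def)

lemma f_meas [measurable]: "f_nu \<nu> \<in> borel_measurable borel"
  unfolding f_nu_def by measurable

lemma f_ind: "\<nu> > 0 \<Longrightarrow> \<bar>f_nu \<nu> y\<bar> \<le> indicator {-1..1} y"
  using f_le1[of \<nu> y] f_zero[of y \<nu>] f_nonneg[of \<nu> y]
  by (auto simp: indicator_def abs_le_iff)

lemma J_beta:
  assumes a: "a > 0"
  shows "(\<integral>\<^sup>+x. indicator {-1..1} x * (1 - x\<^sup>2) powr a \<partial>lborel) =
      ennreal (Beta (1 / 2) (a + 1))"
proof -
  have "((\<lambda>t. t powr (-1 / 2) * (1 - t) powr a) has_integral
          Beta (1 / 2) (a + 1)) {0..1}"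
    using has_integral_Beta_real[of "1/2" "a + 1"] a by simp
  from nn_integral_has_integral_lebesgue[OF _ this] have
     "ennreal (Beta (1 / 2) (a + 1)) =
        nn_integral lborel (\<lambda>t. ennreal (t powr (-1 / 2) * (1 - t) powr a *
                                indicator {0^2..1^2} t))"
    by (simp add: mult_ac ennreal_mult' ennreal_indicator)
  also have "\<dots> = (\<integral>\<^sup>+ x. ennreal (x\<^sup>2 powr - (1 / 2) * (1 - x\<^sup>2) powr a * (2 * x) *
                          indicator {0..1} x) \<partial>lborel)"
    by (subst nn_integral_substitution[where g = "\<lambda>x. x ^ 2" and g' = "\<lambda>x. 2 * x"])
       (auto intro!: derivative_eq_intros continuous_intros simp: set_borel_measurable_def)
  also have "\<dots> = (\<integral>\<^sup>+ x. 2 * ennreal ((1 - x\<^sup>2) powr a * indicator {0..1} x) \<partial>lborel)"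
    by (intro nn_integral_cong_AE AE_I[of _ _ "{0}"])
       (auto simp: indicator_def powr_minus powr_half_sqrt field_split_simps ennreal_mult')
  also have "\<dots> = (\<integral>\<^sup>+ x. ennreal ((1 - x\<^sup>2) powr a * indicator {0..1} x) \<partial>lborel) +
                    (\<integral>\<^sup>+ x. ennreal ((1 - x\<^sup>2) powr a * indicator {0..1} x) \<partial>lborel)"
    (is "_ = ?I + _") by (simp add: mult_2 nn_integral_add)
  also have "?I = (\<integral>\<^sup>+ x. ennreal ((1 - x\<^sup>2) powr a * indicator {-1..0} x) \<partial>lborel)"
    by (subst nn_integral_real_affine[of _ "-1" 0])
       (auto simp: indicator_def intro!: nn_integral_cong)
  hence "?I + ?I = \<dots> + ?I" by simp
  also have "\<dots> = (\<integral>\<^sup>+ x. ennreal ((1 - x\<^sup>2) powr a *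
                    (indicator {-1..0} x + indicator{0..1} x)) \<partial>lborel)"
    by (subst nn_integral_add [symmetric]) (auto simp: algebra_simps)
  also have "\<dots> = (\<integral>\<^sup>+ x. ennreal (indicator {-1..1} x * (1 - x\<^sup>2) powr a) \<partial>lborel)"
    by (intro nn_integral_cong_AE AE_I[of _ _ "{0}"]) (auto simp: indicator_def)
  finally show ?thesis by (simp add: ennreal_mult' ennreal_indicator)
qed

lemma J_int:
  assumes a: "a > 0"
  shows "(LINT x|lborel. indicator {-1..1} x * (1 - x\<^sup>2) powr a) = Beta (1/2::real) (a+1)"
proof -
  have "(LINT x|lborel. indicator {-1..1} x * (1 - x\<^sup>2) powr a) =
     enn2real (\<integral>\<^sup>+x. ennreal (indicator {-1..1} x * (1 - x\<^sup>2) powr a) \<partial>lborel)"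
    by (rule integral_eq_nn_integral) auto
  also have "\<dots> = Beta (1/2) (a+1)"
  proof -
    have "Beta (1/2) (a+1) \<ge> 0" unfolding Beta_def using a by (auto intro!: Gamma_real_pos less_imp_le)
    then show ?thesis using J_beta[OF a] by (simp add: ennreal_mult' ennreal_indicator)
  qed
  finally show ?thesis .
qed

definition cst :: "real \<Rightarrow> real" where
  "cst \<nu> = Gamma (3/2 + 2*\<nu>) / (sqrt pi * Gamma (1 + 2*\<nu>))"

lemma cst_pos: "\<nu> > 0 \<Longrightarrow> cst \<nu> > 0"
  by (simp add: cst_def Gamma_real_pos)

lemma cst_Beta: assumes "\<nu> > 0" shows "cst \<nu> * Beta (1/2) (2*\<nu>+1) = 1"
proof -
  have a: "Gamma (3/2+2*\<nu>) > 0" "Gamma (1+2*\<nu>) > 0" using assms by (auto intro!: Gamma_real_pos)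
  have b: "1/2 + (2*\<nu>+1) = 3/2+2*\<nu>" "2*\<nu>+1 = 1+2*\<nu>" by simp_all
  show ?thesis unfolding cst_def Beta_def b using a by (simp add: Gamma_one_half_real)
qed

lemma g0: assumes "\<nu> > 0" shows "g_nu \<nu> X 0 = 1"
proof -
  have "(\<lambda>y. f_nu \<nu> y * f_nu \<nu> (2*0/X - y)) = (\<lambda>y. indicator {-1..1} y * (1 - y\<^sup>2) powr (2*\<nu>))"
  proof
    fix y
    show "f_nu \<nu> y * f_nu \<nu> (2*0/X - y) = indicator {-1..1} y * (1 - y\<^sup>2) powr (2*\<nu>)"
    proof (cases "\<bar>y\<bar> < 1")
      case True
      then show ?thesis by (simp add: f_nu_def indicator_def powr_add[symmetric] abs_less_iff)
    next
      case False
      then have "\<bar>y\<bar> = 1 \<or> \<bar>y\<bar> > 1" by auto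
      then show ?thesis using False
        by (auto simp: f_nu_def indicator_def abs_if split: if_splits)
    qed
  qed
  then have "g_nu \<nu> X 0 = cst \<nu> * Beta (1/2) (2*\<nu>+1)"
    unfolding g_nu_def cst_def using J_int[of "2*\<nu>"] assms by simp
  then show ?thesis using cst_Beta[OF assms] by simp
qed

lemma g_supp: assumes "X > 0" "x > X" shows "g_nu \<nu> X x = 0"
proof -
  have "2*x/X > 2" using assms by (simp add: field_simps)
  then have "(\<lambda>y. f_nu \<nu> y * f_nu \<nu> (2*x/X - y)) = (\<lambda>y. 0)"
    by (auto simp: f_nu_def)
  then show ?thesis unfolding g_nu_def by simp
qed



definition FF :: "real \<Rightarrow> real \<Rightarrow> real" where
  "FF \<nu> k = (LBINT y. f_nu \<nu> y * cos (k*y))"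

definition conv :: "real \<Rightarrow> real \<Rightarrow> real" where
  "conv \<nu> u = (LBINT y. f_nu \<nu> y * f_nu \<nu> (u - y))"

lemma integrable_ind_box: "integrable lborel (indicator ({-1..1::real}) :: real \<Rightarrow> real)"
  by (simp add: integrable_indicator_iff emeasure_lborel_cbox_finite[unfolded cbox_interval])

lemma integrable_f_trig:
  assumes "\<nu> > 0"
  shows "integrable lborel (\<lambda>y. f_nu \<nu> y * cos (k*y))"
        "integrable lborel (\<lambda>y. f_nu \<nu> y * sin (k*y))"
proof -
  show "integrable lborel (\<lambda>y. f_nu \<nu> y * cos (k*y))"
    apply (rule Bochner_Integration.integrable_bound[OF integrable_ind_box])
     apply measurable
    using f_ind[OF assms] by (auto intro!: AE_I2 simp: abs_mult intro: order_trans[OF mult_right_le_one_le])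
  show "integrable lborel (\<lambda>y. f_nu \<nu> y * sin (k*y))"
    apply (rule Bochner_Integration.integrable_bound[OF integrable_ind_box])
     apply measurable
    using f_ind[OF assms] by (auto intro!: AE_I2 simp: abs_mult intro: order_trans[OF mult_right_le_one_le])
qed

lemma Fs_zero: "(LBINT y. f_nu \<nu> y * sin (k*y)) = 0"
proof -
  have "(LBINT y. f_nu \<nu> y * sin (k*y)) = \<bar>-1\<bar> *\<^sub>R (LBINT y. f_nu \<nu> (0 + -1*y) * sin (k*(0 + -1*y)))"
    by (rule lborel_integral_real_affine) simp
  also have "\<dots> = - (LBINT y. f_nu \<nu> y * sin (k*y))"
    by (simp add: f_even)
  finally show ?thesis by simp
qed

lemma integrable_P:
  assumes "\<nu> > 0"
  shows "integrable (lborel \<Otimes>\<^sub>M lborel) (\<lambda>(u,y). f_nu \<nu> y * f_nu \<nu> (u - y) * cos (k*u))"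
proof -
  let ?A = "{-2..2::real} \<times> {-1..1::real}"
  have "emeasure (lborel \<Otimes>\<^sub>M lborel) ?A < \<infinity>"
    unfolding lborel_prod
    by (rule emeasure_bounded_finite) (auto intro!: bounded_Times)
  then have int: "integrable (lborel \<Otimes>\<^sub>M lborel) (indicator ?A :: real \<times> real \<Rightarrow> real)"
    unfolding lborel_prod by (simp add: integrable_indicator_iff borel_closed closed_Times)
  show ?thesis
  proof (rule Bochner_Integration.integrable_bound[OF int])
    show "(\<lambda>(u,y). f_nu \<nu> y * f_nu \<nu> (u - y) * cos (k*u)) \<in> borel_measurable (lborel \<Otimes>\<^sub>M lborel)"
      by measurable
    show "AE x in lborel \<Otimes>\<^sub>M lborel. norm ((\<lambda>(u,y). f_nu \<nu> y * f_nu \<nu> (u - y) * cos (k*u)) x) \<le> norm (indicator ?A x :: real)"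
    proof (rule AE_I2, clarify)
      fix u y :: real
      have a: "\<bar>f_nu \<nu> y\<bar> \<le> 1" "\<bar>f_nu \<nu> (u-y)\<bar> \<le> 1" "\<bar>cos (k*u)\<bar> \<le> 1"
        using f_le1[OF assms] f_nonneg by auto
      have b: "\<bar>f_nu \<nu> y * f_nu \<nu> (u - y) * cos (k*u)\<bar> \<le> 1"
        using a by (simp add: abs_mult mult_le_one)
      show "norm (f_nu \<nu> y * f_nu \<nu> (u - y) * cos (k*u)) \<le> norm (indicator ?A (u,y) :: real)"
      proof (cases "(u,y) \<in> ?A")
        case True then show ?thesis using b by simp
      next
        case False
        then have "\<bar>y\<bar> \<ge> 1 \<or> \<bar>u - y\<bar> \<ge> 1" by auto
        then show ?thesis using False by (auto simp: f_zero)
      qed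
    qed
  qed
qed

lemma fourier_conv:
  assumes "\<nu> > 0"
  shows "integrable lborel (\<lambda>u. conv \<nu> u * cos (k*u))"
        "(LBINT u. conv \<nu> u * cos (k*u)) = (FF \<nu> k)\<^sup>2"
proof -
  have P: "integrable (lborel \<Otimes>\<^sub>M lborel) (\<lambda>(u,y). f_nu \<nu> y * f_nu \<nu> (u - y) * cos (k*u))"
    by (rule integrable_P[OF assms])
  have eq: "conv \<nu> u * cos (k*u) = (LBINT y. f_nu \<nu> y * f_nu \<nu> (u - y) * cos (k*u))" for u
    unfolding conv_def by simp
  show "integrable lborel (\<lambda>u. conv \<nu> u * cos (k*u))"
    unfolding eq using lborel_pair.integrable_fst[OF P] .
  have inner: "(LBINT u. f_nu \<nu> y * f_nu \<nu> (u - y) * cos (k*u)) = f_nu \<nu> y * cos (k*y) * FF \<nu> k" for y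
  proof -
    have "(LBINT u. f_nu \<nu> y * f_nu \<nu> (u - y) * cos (k*u)) = f_nu \<nu> y * (LBINT u. f_nu \<nu> (u - y) * cos (k*u))"
      by (simp add: mult.assoc)
    also have "(LBINT u. f_nu \<nu> (u - y) * cos (k*u)) = (LBINT w. f_nu \<nu> w * cos (k*(y + w)))"
      using lborel_integral_real_affine[where c=1 and t=y and f="\<lambda>u. f_nu \<nu> (u - y) * cos (k*u)"] by simp
    also have "\<dots> = (LBINT w. cos (k*y) * (f_nu \<nu> w * cos (k*w)) - sin (k*y) * (f_nu \<nu> w * sin (k*w)))"
      by (simp add: distrib_left cos_add algebra_simps)
    also have "\<dots> = cos (k*y) * FF \<nu> k - sin (k*y) * (LBINT w. f_nu \<nu> w * sin (k*w))"
      unfolding FF_def using integrable_f_trig[OF assms, of k] by simp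
    also have "\<dots> = cos (k*y) * FF \<nu> k" by (simp add: Fs_zero)
    finally show ?thesis by simp
  qed
  have "(LBINT u. conv \<nu> u * cos (k*u)) = (LBINT u. LBINT y. f_nu \<nu> y * f_nu \<nu> (u - y) * cos (k*u))"
    unfolding eq ..
  also have "\<dots> = (LBINT y. LBINT u. f_nu \<nu> y * f_nu \<nu> (u - y) * cos (k*u))"
    using lborel_pair.Fubini_integral[OF P] by simp
  also have "\<dots> = (LBINT y. f_nu \<nu> y * cos (k*y) * FF \<nu> k)"
    unfolding inner ..
  also have "\<dots> = (FF \<nu> k)\<^sup>2"
    by (simp add: FF_def power2_eq_square)
  finally show "(LBINT u. conv \<nu> u * cos (k*u)) = (FF \<nu> k)\<^sup>2" .
qed



lemma conv_even: "conv \<nu> (-u) = conv \<nu> u"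
proof -
  have "conv \<nu> (-u) = \<bar>-1\<bar> *\<^sub>R (LBINT y. f_nu \<nu> (0 + -1*y) * f_nu \<nu> (-u - (0 + -1*y)))"
    unfolding conv_def by (rule lborel_integral_real_affine) simp
  also have "\<dots> = conv \<nu> u"
    unfolding conv_def
  proof (simp only: abs_minus_cancel abs_one scaleR_one, intro Bochner_Integration.integral_cong refl)
    fix y
    have "-u - (0 + -1*y) = -(u - y)" by simp
    then show "f_nu \<nu> (0 + -1*y) * f_nu \<nu> (-u - (0 + -1*y)) = f_nu \<nu> y * f_nu \<nu> (u - y)"
      using f_even[of \<nu> y] f_even[of \<nu> "u-y"] by simp
  qed
  finally show ?thesis .
qed

lemma g_conv: "g_nu \<nu> X x = cst \<nu> * conv \<nu> (2*x/X)"
  unfolding g_nu_def cst_def conv_def ..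

lemma h_formula:
  assumes "\<nu> > 0" "X > 0"
  shows "h_nu \<nu> X t = cst \<nu> * (X/2) * (FF \<nu> (t*X/2))\<^sup>2"
proof -
  define k where "k = t*X/2"
  define G where "G u = conv \<nu> u * cos (k*u)" for u
  define q where "q x = conv \<nu> (2*x/X) * cos (t*x)" for x
  have Gint: "integrable lborel G" unfolding G_def by (rule fourier_conv[OF assms(1)])
  have Gval: "(LBINT u. G u) = (FF \<nu> k)\<^sup>2" unfolding G_def by (rule fourier_conv[OF assms(1)])
  have qG: "q x = G (0 + (2/X) * x)" for x
    unfolding q_def G_def k_def using assms by simp
  have qint: "integrable lborel q"
    unfolding qG using lborel_integrable_real_affine_iff[of "2/X" G 0] assms Gint by simp
  have qval: "(LBINT x. q x) = (X/2) * (FF \<nu> k)\<^sup>2"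
  proof -
    have "(LBINT x. q x) = \<bar>X/2\<bar> *\<^sub>R (LBINT u. q (0 + (X/2)*u))"
      by (rule lborel_integral_real_affine) (use assms in simp)
    also have "(\<lambda>u. q (0 + (X/2)*u)) = G"
      unfolding q_def G_def k_def using assms by (auto simp: fun_eq_iff mult.assoc)
    finally show ?thesis using Gval assms by simp
  qed
  have qeven: "q (-x) = q x" for x
    unfolding q_def using conv_even[of \<nu> "2*x/X"] by simp
  have int1: "integrable lborel (\<lambda>x. indicator {0..} x * q x)"
    using integrable_mult_indicator[OF _ qint, of "{0..}"] by simp
  have int2: "integrable lborel (\<lambda>x. indicator {..0} x * q x)"
    using integrable_mult_indicator[OF _ qint, of "{..0}"] by simp
  have refl: "(LBINT x. indicator {..0} x * q x) = (LBINT x. indicator {0..} x * q x)"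
  proof -
    have "(LBINT x. indicator {..0} x * q x) = \<bar>-1\<bar> *\<^sub>R (LBINT x. indicator {..0} (0 + -1*x) * q (0 + -1*x))"
      by (rule lborel_integral_real_affine) simp
    also have "\<dots> = (LBINT x. indicator {0..} x * q x)"
      by (simp only: abs_minus_cancel abs_one scaleR_one, intro Bochner_Integration.integral_cong refl)
         (auto simp: qeven indicator_def)
    finally show ?thesis .
  qed
  have "(LBINT x. q x) = (LBINT x. indicator {0..} x * q x + indicator {..0} x * q x)"
  proof (rule integral_cong_AE)
    show "AE x in lborel. q x = indicator {0..} x * q x + indicator {..0} x * q x"
      using AE_lborel_singleton[of 0] by eventually_elim (auto simp: indicator_def)
    show "q \<in> borel_measurable lborel" using qint by (rule borel_measurable_integrable)
    show "(\<lambda>x. indicator {0..} x * q x + indicator {..0} x * q x) \<in> borel_measurable lborel"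
      using Bochner_Integration.integrable_add[OF int1 int2] by (rule borel_measurable_integrable)
  qed
  also have "\<dots> = 2 * (LBINT x. indicator {0..} x * q x)"
    using int1 int2 refl by simp
  finally have half: "(LBINT x. indicator {0..} x * q x) = (X/4) * (FF \<nu> k)\<^sup>2"
    using qval by simp
  have "h_nu \<nu> X t = 2 * (LBINT x. indicator {0..} x * (cst \<nu> * q x))"
    unfolding h_nu_def set_lebesgue_integral_def g_conv q_def by (simp add: mult.assoc)
  also have "\<dots> = 2 * cst \<nu> * (LBINT x. indicator {0..} x * q x)"
    by (simp add: mult.left_commute)
  finally show ?thesis using half k_def by simp
qed

lemma h_nonneg: assumes "\<nu> > 0" "X > 0" shows "h_nu \<nu> X t \<ge> 0"
proof -
  have "cst \<nu> * (X/2) * (FF \<nu> (t*X/2))\<^sup>2 \<ge> 0"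
    using cst_pos[OF assms(1)] assms(2) by simp
  then show ?thesis using h_formula[OF assms, of t] by linarith
qed



definition phi :: "real \<Rightarrow> real \<Rightarrow> complex \<Rightarrow> complex" where
  "phi \<nu> k z = (1 - z\<^sup>2) powr (of_real \<nu>) * exp (\<i> * of_real k * z)"

definition SS :: "complex set" where
  "SS = {z. cmod z \<le> 1 \<and> 0 \<le> Im z}"

lemma SS_Re: assumes "z \<in> SS" shows "0 \<le> Re (1 - z\<^sup>2)"
proof -
  have "\<bar>Re z\<bar> \<le> 1" using assms abs_Re_le_cmod[of z] unfolding SS_def by auto
  then have "(Re z)\<^sup>2 \<le> 1" by (simp add: abs_square_le_1)
  moreover have "Re (1 - z\<^sup>2) = 1 - (Re z)\<^sup>2 + (Im z)\<^sup>2" by (simp add: power2_eq_square)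
  moreover have "0 \<le> (Im z)\<^sup>2" by simp
  ultimately show ?thesis by linarith
qed

lemma SS_notnonpos: assumes "z \<in> SS" "z \<noteq> 1" "z \<noteq> -1" shows "1 - z\<^sup>2 \<notin> \<real>\<^sub>\<le>\<^sub>0"
proof
  assume "1 - z\<^sup>2 \<in> \<real>\<^sub>\<le>\<^sub>0"
  then have r: "Re (1 - z\<^sup>2) \<le> 0" by (simp add: complex_nonpos_Reals_iff)
  have n: "(Re z)\<^sup>2 + (Im z)\<^sup>2 \<le> 1"
    using assms(1) unfolding SS_def cmod_def by (simp add: real_sqrt_le_1_iff)
  from r have "1 - (Re z)\<^sup>2 + (Im z)\<^sup>2 \<le> 0" by (simp add: power2_eq_square)
  moreover have "0 \<le> (Im z)\<^sup>2" by simp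
  ultimately have "(Im z)\<^sup>2 = 0" "(Re z)\<^sup>2 = 1" using n by linarith+
  then have "Im z = 0" "(Re z)\<^sup>2 = 1" by auto
  then have "z = 1 \<or> z = -1"
    by (auto simp: complex_eq_iff power2_eq_1_iff)
  with assms show False by auto
qed

lemma phi_cont: assumes "\<nu> > 0" shows "continuous_on SS (phi \<nu> k)"
  unfolding phi_def
  by (intro continuous_intros continuous_on_powr_complex) (use SS_Re assms in auto)

lemma phi_diff: assumes "z \<in> SS" "z \<noteq> 1" "z \<noteq> -1" shows "phi \<nu> k field_differentiable at z"
proof -
  have "phi \<nu> k analytic_on {z}"
    unfolding phi_def by (intro analytic_intros) (use SS_notnonpos[OF assms] in auto)
  then show ?thesis using analytic_on_imp_differentiable_at by blast
qed

lemma convex_SS: "convex SS"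
proof -
  have "SS = cball 0 1 \<inter> {z. 0 \<le> Im z}" unfolding SS_def by auto
  moreover have "convex {z. 0 \<le> Im z}"
    unfolding convex_def by (auto intro: add_nonneg_nonneg mult_nonneg_nonneg)
  then have "convex (cball 0 1 \<inter> {z. 0 \<le> Im z})" by (rule convex_Int[OF convex_cball])
  ultimately show ?thesis by simp
qed

lemma line_in_SS: "closed_segment (-1) 1 \<subseteq> SS"
proof
  fix z assume "z \<in> closed_segment (-1) (1::complex)"
  then obtain u where u: "0 \<le> u" "u \<le> 1" "z = (1 - u) *\<^sub>R (-1) + u *\<^sub>R 1"
    unfolding closed_segment_def by auto
  then have zeq: "z = of_real (2*u - 1)" by (simp add: scaleR_conv_of_real algebra_simps)
  have "cmod z = cmod (of_real (2*u - 1) :: complex)" using zeq by simp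
  also have "\<dots> = \<bar>2*u - 1\<bar>" by (rule norm_of_real)
  finally have "cmod z \<le> 1" using u by simp
  moreover have "Im z = 0" using zeq by simp
  ultimately show "z \<in> SS" unfolding SS_def by auto
qed

lemma arc_in_SS: "path_image (part_circlepath 0 1 0 pi) \<subseteq> SS"
proof
  fix z assume "z \<in> path_image (part_circlepath 0 1 0 pi)"
  then obtain t where t: "0 \<le> t" "t \<le> pi" "z = exp (\<i> * of_real t)"
    by (auto simp: path_image_part_circlepath)
  then show "z \<in> SS" unfolding SS_def by (auto simp: Im_exp sin_ge_zero)
qed

lemma cis_sq_norm: assumes "0 \<le> t" "t \<le> pi" shows "cmod (1 - (cis t)\<^sup>2) = 2 * sin t"
proof -
  have "1 - (cis t)\<^sup>2 = cis t * (cis (-t) - cis t)"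
    by (simp add: power2_eq_square algebra_simps cis_mult)
  also have "cis (-t) - cis t = - (2 * \<i> * of_real (sin t))"
    by (simp add: complex_eq_iff)
  finally have "cmod (1 - (cis t)\<^sup>2) = 2 * \<bar>sin t\<bar>"
    by (simp add: norm_mult)
  then show ?thesis using sin_ge_zero[OF assms] by simp
qed

lemma FF_contour:
  assumes "\<nu> > 0" "k > 0" "M integrable_on {0..pi}"
    and Mb: "\<And>t. t \<in> {0..pi} \<Longrightarrow> (2 * sin t) powr \<nu> * exp (- k * sin t) \<le> M t"
  shows "\<bar>FF \<nu> k\<bar> \<le> integral {0..pi} M"
proof -
  define g1 where "g1 = linepath (-1) (1::complex)"
  define g2 where "g2 = part_circlepath 0 1 0 pi"
  have v1: "valid_path g1" and v2: "valid_path g2" unfolding g1_def g2_def by auto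
  have im2: "path_image g2 \<subseteq> SS" unfolding g2_def by (rule arc_in_SS)
  have im1: "path_image g1 \<subseteq> SS" unfolding g1_def using line_in_SS by simp
  have c1: "phi \<nu> k contour_integrable_on g1"
    unfolding g1_def by (rule contour_integrable_continuous_linepath)
       (use continuous_on_subset[OF phi_cont[OF assms(1)] line_in_SS] in auto)
  have c2: "phi \<nu> k contour_integrable_on g2"
    unfolding g2_def by (rule contour_integrable_continuous_part_circlepath)
       (use continuous_on_subset[OF phi_cont[OF assms(1)] arc_in_SS] in auto)
  have fin: "pathfinish g1 = pathstart g2" "pathfinish g2 = pathstart g1"
    unfolding g1_def g2_def by (auto simp: pathstart_def pathfinish_def part_circlepath_def linepath_def)
  have "(phi \<nu> k has_contour_integral 0) (g1 +++ g2)"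
  proof (rule Cauchy_theorem_convex[OF phi_cont[OF assms(1)] convex_SS, of "{1,-1}"])
    show "finite {1, - 1 :: complex}" by simp
    show "\<And>x. x \<in> interior SS - {1, - 1} \<Longrightarrow> phi \<nu> k field_differentiable at x"
      using phi_diff interior_subset by blast
    show "valid_path (g1 +++ g2)" using v1 v2 fin by simp
    show "path_image (g1 +++ g2) \<subseteq> SS" using im1 im2 fin by (simp add: path_image_join)
    show "pathfinish (g1 +++ g2) = pathstart (g1 +++ g2)" using fin by simp
  qed
  then have "contour_integral (g1 +++ g2) (phi \<nu> k) = 0" by (rule contour_integral_unique)
  then have sum0: "contour_integral g1 (phi \<nu> k) + contour_integral g2 (phi \<nu> k) = 0"
    using contour_integral_join[OF c1 c2 v1 v2] by simp
  define I1 where "I1 = contour_integral g1 (phi \<nu> k)"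
  define I2 where "I2 = contour_integral g2 (phi \<nu> k)"
  have "(phi \<nu> k has_contour_integral I1) g1"
    unfolding I1_def using c1 by (rule has_contour_integral_integral)
  then have "((\<lambda>x. phi \<nu> k (of_real x)) has_integral I1) {-1..1}"
    unfolding g1_def by (subst (asm) has_contour_integral_linepath_Reals_iff) auto
  from has_integral_Re[OF this]
  have hR: "((\<lambda>x. Re (phi \<nu> k (of_real x))) has_integral Re I1) {-1..1}" .
  have eqR: "Re (phi \<nu> k (of_real x)) = (1 - x\<^sup>2) powr \<nu> * cos (k * x)" if "x \<in> {-1..1}" for x
  proof -
    have "0 \<le> 1 - x\<^sup>2" using that by (simp add: abs_square_le_1 abs_le_iff)
    then have "(1 - (of_real x)\<^sup>2) powr (of_real \<nu>) = (of_real ((1 - x\<^sup>2) powr \<nu>) :: complex)"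
      using powr_of_real[of "1 - x\<^sup>2" \<nu>] by simp
    then show ?thesis unfolding phi_def by (simp add: Re_exp)
  qed
  have hR2: "((\<lambda>x. (1 - x\<^sup>2) powr \<nu> * cos (k * x)) has_integral Re I1) {-1..1}"
    using has_integral_eq[OF _ hR] eqR by auto
  have contR: "continuous_on {-1..1} (\<lambda>x. (1 - x\<^sup>2) powr \<nu> * cos (k * x))"
    by (intro continuous_intros continuous_on_powr') (use assms in \<open>auto simp: abs_square_le_1 abs_le_iff\<close>)
  have si: "set_integrable lborel {-1..1} (\<lambda>x. (1 - x\<^sup>2) powr \<nu> * cos (k * x))"
    unfolding set_integrable_def using borel_integrable_compact[OF _ contR] by simp
  have "FF \<nu> k = (LINT x:{-1..1}|lborel. (1 - x\<^sup>2) powr \<nu> * cos (k * x))"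
    unfolding FF_def set_lebesgue_integral_def
  proof (intro Bochner_Integration.integral_cong refl)
    fix x :: real
    show "f_nu \<nu> x * cos (k * x) = indicator {-1..1} x *\<^sub>R ((1 - x\<^sup>2) powr \<nu> * cos (k * x))"
    proof (cases "\<bar>x\<bar> < 1")
      case True then show ?thesis by (auto simp: f_nu_def indicator_def abs_less_iff)
    next
      case False
      then have "\<bar>x\<bar> = 1 \<or> \<bar>x\<bar> > 1" by auto
      then show ?thesis using False assms(1)
        by (auto simp: f_nu_def indicator_def abs_if split: if_splits)
    qed
  qed
  also have "\<dots> = integral {-1..1} (\<lambda>x. (1 - x\<^sup>2) powr \<nu> * cos (k * x))"
    using set_borel_integral_eq_integral(2)[OF si] .
  also have "\<dots> = Re I1" using hR2 by (rule integral_unique)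
  finally have FFI: "FF \<nu> k = Re I1" .
  have "(phi \<nu> k has_contour_integral I2) g2"
    unfolding I2_def using c2 by (rule has_contour_integral_integral)
  then have hI2: "((\<lambda>t. phi \<nu> k (0 + of_real 1 * cis t) * of_real 1 * \<i> * cis t) has_integral I2) {0..pi}"
    unfolding g2_def by (subst (asm) has_contour_integral_part_circlepath_iff) auto
  have nb: "norm (phi \<nu> k (0 + of_real 1 * cis t) * of_real 1 * \<i> * cis t) \<le> M t" if "t \<in> {0..pi}" for t
  proof -
    have t: "0 \<le> t" "t \<le> pi" using that by auto
    have "norm (phi \<nu> k (0 + of_real 1 * cis t) * of_real 1 * \<i> * cis t) = norm (phi \<nu> k (cis t))"
      by (simp add: norm_mult)
    also have "\<dots> = (2 * sin t) powr \<nu> * exp (- k * sin t)"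
    proof -
      have e: "cmod (exp (\<i> * of_real k * cis t)) = exp (- k * sin t)"
        by (simp add: norm_exp_eq_Re)
      have p: "cmod ((1 - (cis t)\<^sup>2) powr (of_real \<nu>)) = (2 * sin t) powr \<nu>"
        by (subst norm_powr_real_powr') (auto simp: cis_sq_norm[OF t])
      show ?thesis unfolding phi_def norm_mult e p ..
    qed
    also have "\<dots> \<le> M t" using Mb[OF that] .
    finally show ?thesis .
  qed
  have "norm I2 \<le> integral {0..pi} M"
    using integral_norm_bound_integral[OF has_integral_integrable[OF hI2] assms(3) nb] integral_unique[OF hI2]
    by simp
  moreover have "\<bar>FF \<nu> k\<bar> \<le> norm I2"
  proof -
    have "I1 = - I2" using sum0 unfolding I1_def[symmetric] I2_def[symmetric] by (simp add: eq_neg_iff_add_eq_0)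
    then have "norm I1 = norm I2" by simp
    then show ?thesis using FFI abs_Re_le_cmod[of I1] by simp
  qed
  ultimately show ?thesis by linarith
qed



lemma ln_sq_bound:
  fixes t :: real assumes "t > -1"
  shows "ln (1 + t) - t \<le> - (sqrt (1 + t) - 1)\<^sup>2"
proof -
  define s where "s = sqrt (1 + t)"
  have s0: "s > 0" unfolding s_def using assms by simp
  have ss: "s\<^sup>2 = 1 + t" unfolding s_def using assms by simp
  have "ln (1 + t) = 2 * ln s" using ss s0 by (metis ln_realpow of_nat_numeral power2_eq_square)
  also have "\<dots> \<le> 2 * (s - 1)" using ln_le_minus_one[OF s0] by simp
  finally have "ln (1+t) \<le> 2 * (s - 1)" .
  then show ?thesis unfolding s_def[symmetric] using ss by (simp add: power2_eq_square algebra_simps)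
qed

definition bb :: "real \<Rightarrow> real" where "bb \<nu> = min (sqrt \<nu> / 3) (\<nu> / 8)"

lemma L1:
  fixes t \<nu> :: real assumes "t > -1" "\<nu> > 0"
  shows "\<nu> * (ln (1 + t) - t) \<le> 1 - bb \<nu> * \<bar>t\<bar>"
proof -
  define s where "s = sqrt (1 + t)"
  have s0: "s \<ge> 0" unfolding s_def using assms by simp
  have ss: "s\<^sup>2 = 1 + t" unfolding s_def using assms by simp
  have lb: "ln (1 + t) - t \<le> - (s - 1)\<^sup>2" unfolding s_def by (rule ln_sq_bound[OF assms(1)])
  have tt: "t = (s - 1) * (s + 1)" using ss by (simp add: power2_eq_square algebra_simps)
  have b1: "bb \<nu> \<le> sqrt \<nu> / 3" "bb \<nu> \<le> \<nu> / 8" unfolding bb_def by auto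
  have b0: "bb \<nu> \<ge> 0" unfolding bb_def using assms by auto
  show ?thesis
  proof (cases "t \<le> 1")
    case True
    have "s\<^sup>2 \<le> 2" using ss True by simp
    then have "s\<^sup>2 \<le> (3/2)\<^sup>2" by (simp add: power2_eq_square)
    then have s32: "s \<le> 3/2" by (rule power2_le_imp_le) simp
    have "t\<^sup>2 \<le> (s - 1)\<^sup>2 * (25/4)"
    proof -
      have "t\<^sup>2 = (s-1)\<^sup>2 * (s+1)\<^sup>2" using tt by (simp add: power_mult_distrib)
      moreover have "(s+1)\<^sup>2 \<le> (5/2)\<^sup>2" using s0 s32 by (intro power_mono) auto
      then have "(s+1)\<^sup>2 \<le> 25/4" by (simp add: power2_eq_square)
      moreover have "(s-1)\<^sup>2 * (s+1)\<^sup>2 \<le> (s-1)\<^sup>2 * (25/4)"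
        using \<open>(s+1)\<^sup>2 \<le> 25/4\<close> by (intro mult_left_mono) auto
      ultimately show ?thesis by simp
    qed
    then have "ln (1 + t) - t \<le> - ((4/25) * t\<^sup>2)" using lb by simp
    then have "\<nu> * (ln (1 + t) - t) \<le> \<nu> * (- ((4/25) * t\<^sup>2))"
      using assms(2) by (intro mult_left_mono) auto
    also have "\<dots> = - \<nu> * (4/25) * t\<^sup>2" by simp
    also have "\<dots> \<le> 1 - (sqrt \<nu> / 3) * \<bar>t\<bar>"
    proof -
      define x where "x = sqrt \<nu> * \<bar>t\<bar>"
      have e2: "\<nu> * (4/25) * t\<^sup>2 = 4/25 * x\<^sup>2" unfolding x_def using assms
        by (simp add: power_mult_distrib)
      have e1: "(sqrt \<nu> / 3) * \<bar>t\<bar> = x / 3" unfolding x_def by simp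
      have "x / 3 \<le> 1 + 4/25 * x\<^sup>2"
      proof -
        have "0 \<le> 4/25*(x - 25/24)\<^sup>2" by simp
        moreover have "4/25*(x - 25/24)\<^sup>2 = 4/25*x\<^sup>2 - x/3 + 25/144"
          by (simp add: power2_eq_square field_simps)
        ultimately show ?thesis by linarith
      qed
      then show ?thesis using e1 e2 by linarith
    qed
    also have "\<dots> \<le> 1 - bb \<nu> * \<bar>t\<bar>"
    proof -
      have "bb \<nu> * \<bar>t\<bar> \<le> (sqrt \<nu> / 3) * \<bar>t\<bar>" using b1 by (intro mult_right_mono) auto
      then show ?thesis by linarith
    qed
    finally show ?thesis .
  next
    case False
    then have t1: "t \<ge> 1" by simp
    have "1\<^sup>2 \<le> s\<^sup>2" using ss t1 by simp
    then have s1: "1 \<le> s" by (rule power2_le_imp_le) (use s0 in simp)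
    have "s * 1 \<le> s * s" using s1 s0 by (intro mult_left_mono) auto
    then have "s \<le> 1 + t" using ss by (simp add: power2_eq_square)
    then have "(s+1)\<^sup>2 \<le> 7 * t" using ss t1 by (simp add: power2_eq_square algebra_simps)
    have "t * t \<le> (s - 1)\<^sup>2 * (7 * t)"
    proof -
      have "t * t = (s-1)\<^sup>2 * (s+1)\<^sup>2" using tt by (simp add: power2_eq_square)
      also have "\<dots> \<le> (s - 1)\<^sup>2 * (7 * t)" using \<open>(s+1)\<^sup>2 \<le> 7 * t\<close> by (simp add: mult_left_mono)
      finally show ?thesis .
    qed
    then have "t / 7 \<le> (s - 1)\<^sup>2" using t1 by (simp add: field_simps)
    then have "ln (1 + t) - t \<le> - (t / 7)" using lb by simp
    then have "\<nu> * (ln (1 + t) - t) \<le> \<nu> * (- (t / 7))"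
      using assms(2) by (intro mult_left_mono) auto
    also have "\<dots> \<le> - bb \<nu> * t"
    proof -
      have "bb \<nu> * t \<le> (\<nu>/8) * t" using b1 t1 by (intro mult_right_mono) auto
      moreover have "(\<nu>/8) * t \<le> \<nu> * (t/7)" using assms(2) t1 by simp
      ultimately show ?thesis by simp
    qed
    finally show ?thesis using t1 by simp
  qed
qed

lemma L2:
  fixes x m k \<nu> :: real
  assumes "\<nu> > 0" "m > 0" "k * m = \<nu>" "x \<ge> 0"
  shows "(2*x) powr \<nu> * exp (- k * x) \<le> (2*m) powr \<nu> * exp (1 - \<nu>) * exp (- (bb \<nu> / m) * \<bar>x - m\<bar>)"
proof (cases "x = 0")
  case True then show ?thesis by simp
next
  case False
  then have x0: "x > 0" using assms by simp
  define t where "t = x / m - 1"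
  have t1: "t > -1" unfolding t_def using x0 assms by simp
  have xm: "x = m * (1 + t)" unfolding t_def using assms by simp
  have abs_t: "\<bar>x - m\<bar> / m = \<bar>t\<bar>" unfolding t_def using assms by (simp add: field_simps abs_div)
  have "(2*x) powr \<nu> * exp (- k * x) = exp (\<nu> * ln (2*x) - k * x)"
  proof -
    have "(2*x) powr \<nu> = exp (\<nu> * ln (2*x))" using x0 by (simp add: powr_def mult.commute)
    moreover have "exp (\<nu> * ln (2*x)) * exp (- k * x) = exp (\<nu> * ln (2*x) + (- k * x))"
      by (rule mult_exp_exp)
    ultimately show ?thesis by simp
  qed
  also have "\<nu> * ln (2*x) - k * x = \<nu> * ln (2*m) + \<nu> * (ln (1 + t) - t) - \<nu>"
  proof -
    have "ln (2*x) = ln (2*m) + ln (1+t)" using xm assms t1 by (simp add: ln_mult mult.assoc)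
    moreover have "k * x = \<nu> * (1 + t)" using xm assms by (simp add: algebra_simps)
    ultimately show ?thesis by (simp add: algebra_simps)
  qed
  also have "exp \<dots> \<le> exp (\<nu> * ln (2*m) + (1 - bb \<nu> * \<bar>t\<bar>) - \<nu>)"
    using L1[OF t1 assms(1)] by simp
  also have "\<dots> = (2*m) powr \<nu> * exp (1 - \<nu>) * exp (- (bb \<nu> / m) * \<bar>x - m\<bar>)"
  proof -
    have "(bb \<nu> / m) * \<bar>x - m\<bar> = bb \<nu> * \<bar>t\<bar>" using abs_t assms by (simp add: field_simps)
    moreover have "exp (\<nu> * ln (2*m) + (1 - bb \<nu> * \<bar>t\<bar>) - \<nu>) =
        exp (\<nu> * ln (2*m)) * exp (1 - \<nu>) * exp (- (bb \<nu> * \<bar>t\<bar>))"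
    proof -
      have "exp (\<nu> * ln (2*m)) * exp (1 - \<nu>) * exp (- (bb \<nu> * \<bar>t\<bar>)) =
          exp (\<nu> * ln (2*m) + (1 - \<nu>) + - (bb \<nu> * \<bar>t\<bar>))" by (simp add: mult_exp_exp)
      moreover have "\<nu> * ln (2*m) + (1 - bb \<nu> * \<bar>t\<bar>) - \<nu> = \<nu> * ln (2*m) + (1 - \<nu>) + - (bb \<nu> * \<bar>t\<bar>)"
        by simp
      ultimately show ?thesis by simp
    qed
    moreover have "(2*m) powr \<nu> = exp (\<nu> * ln (2*m))" using assms by (simp add: powr_def mult.commute)
    ultimately show ?thesis by simp
  qed
  finally show ?thesis .
qed



lemma sin_lower: assumes "0 \<le> d" "d \<le> pi/4" shows "d/2 \<le> sin d"
proof (cases "d = 0")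
  case True then show ?thesis by simp
next
  case False
  then have d0: "0 < d" using assms by simp
  obtain z where z: "0 < z" "z < d" "sin d - sin 0 = (d - 0) * cos z"
    using MVT2[OF d0, of sin cos] by (auto intro: DERIV_sin)
  have "cos (pi/4) \<le> cos z" using z assms by (intro cos_monotone_0_pi_le) auto
  moreover have "1 \<le> sqrt (2::real)" by simp
  ultimately have "1/2 \<le> cos z" using cos_45 by linarith
  then have "d * (1/2) \<le> d * cos z" using d0 by (intro mult_left_mono) auto
  then show ?thesis using z by simp
qed

lemma L3:
  assumes "0 \<le> \<theta>" "\<theta> \<le> pi/2" "0 \<le> \<psi>" "\<psi> \<le> pi/6"
  shows "\<bar>\<theta> - \<psi>\<bar> \<le> 4 * \<bar>sin \<theta> - sin \<psi>\<bar>"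
proof -
  define d where "d = (\<theta> - \<psi>)/2"
  define w where "w = (\<theta> + \<psi>)/2"
  have sd: "\<bar>d\<bar>/2 \<le> \<bar>sin d\<bar>"
  proof (cases "d \<ge> 0")
    case True
    have "d \<le> pi/4" unfolding d_def using assms by simp
    then show ?thesis using sin_lower[OF True] True by simp
  next
    case False
    have "\<psi> - \<theta> \<le> pi/2" using assms pi_gt_zero by linarith
    then have "-d \<le> pi/4" unfolding d_def by (simp add: field_simps)
    then have "(-d)/2 \<le> sin (-d)" using False by (intro sin_lower) auto
    then show ?thesis using False by simp
  qed
  have cw: "1/2 \<le> cos w"
  proof -
    have "cos (pi/3) \<le> cos w" unfolding w_def using assms by (intro cos_monotone_0_pi_le) auto
    then show ?thesis by (simp add: cos_60)
  qed
  have "sin \<theta> - sin \<psi> = 2 * sin d * cos w" unfolding d_def w_def by (rule sin_diff_sin)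
  then have "\<bar>sin \<theta> - sin \<psi>\<bar> = 2 * \<bar>sin d\<bar> * cos w" using cw by (simp add: abs_mult)
  moreover have "2 * (\<bar>d\<bar>/2) * (1/2) \<le> 2 * \<bar>sin d\<bar> * cos w"
    using sd cw by (intro mult_mono) auto
  ultimately show ?thesis unfolding d_def by simp
qed

lemma arcsin_small: assumes "0 \<le> m" "m \<le> 1/2" shows "0 \<le> arcsin m" "arcsin m \<le> pi/6"
proof -
  show "0 \<le> arcsin m" using assms by (intro arcsin_nonneg) auto
  have "arcsin m \<le> arcsin (1/2)" using assms by (subst arcsin_le_mono) auto
  also have "arcsin (1/2) = pi/6"
    using arcsin_sin[of "pi/6"] by (simp add: sin_30)
  finally show "arcsin m \<le> pi/6" .
qed

lemma M_bound:
  assumes "\<nu> > 0" "k > 0" "\<nu>/k \<le> 1/2" "0 \<le> \<theta>" "\<theta> \<le> pi"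
  defines "m \<equiv> \<nu>/k"
  shows "(2 * sin \<theta>) powr \<nu> * exp (- k * sin \<theta>) \<le>
    (2*m) powr \<nu> * exp (1 - \<nu>) * (exp (- (bb \<nu>/(4*m)) * \<bar>\<theta> - arcsin m\<bar>) + exp (- (bb \<nu>/(4*m)) * \<bar>\<theta> - (pi - arcsin m)\<bar>))"
proof -
  have m0: "m > 0" unfolding m_def using assms by simp
  have m2: "m \<le> 1/2" unfolding m_def using assms by simp
  have km: "k * m = \<nu>" unfolding m_def using assms by simp
  define K0 where "K0 = (2*m) powr \<nu> * exp (1 - \<nu>)"
  have K0: "K0 \<ge> 0" unfolding K0_def by simp
  define \<psi> where "\<psi> = arcsin m"
  have psi: "0 \<le> \<psi>" "\<psi> \<le> pi/6" unfolding \<psi>_def using arcsin_small[of m] m0 m2 by auto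
  have sp: "sin \<psi> = m" unfolding \<psi>_def using m0 m2 by simp
  have bb0: "bb \<nu> \<ge> 0" unfolding bb_def using assms by simp
  have x0: "sin \<theta> \<ge> 0" using assms by (intro sin_ge_zero) auto
  have G: "(2 * sin \<theta>) powr \<nu> * exp (- k * sin \<theta>) \<le> K0 * exp (- (bb \<nu> / m) * \<bar>sin \<theta> - m\<bar>)"
    unfolding K0_def using L2[OF assms(1) m0 km x0] by simp
  have key: "(bb \<nu>/(4*m)) * \<bar>\<theta>' - \<psi>\<bar> \<le> (bb \<nu> / m) * \<bar>sin \<theta> - m\<bar>"
    if "0 \<le> \<theta>'" "\<theta>' \<le> pi/2" "sin \<theta>' = sin \<theta>" for \<theta>'
  proof -
    have "\<bar>\<theta>' - \<psi>\<bar> \<le> 4 * \<bar>sin \<theta> - m\<bar>" using L3[OF that(1,2) psi] that(3) sp by simp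
    then have "(bb \<nu>/(4*m)) * \<bar>\<theta>' - \<psi>\<bar> \<le> (bb \<nu>/(4*m)) * (4 * \<bar>sin \<theta> - m\<bar>)"
      using bb0 m0 by (intro mult_left_mono) auto
    then show ?thesis using m0 by simp
  qed
  show ?thesis
  proof (cases "\<theta> \<le> pi/2")
    case True
    have "exp (- (bb \<nu> / m) * \<bar>sin \<theta> - m\<bar>) \<le> exp (- (bb \<nu>/(4*m)) * \<bar>\<theta> - \<psi>\<bar>)"
      using key[of \<theta>] True assms by simp
    then have "K0 * exp (- (bb \<nu> / m) * \<bar>sin \<theta> - m\<bar>) \<le> K0 * (exp (- (bb \<nu>/(4*m)) * \<bar>\<theta> - \<psi>\<bar>) + exp (- (bb \<nu>/(4*m)) * \<bar>\<theta> - (pi - \<psi>)\<bar>))"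
      using K0 by (intro mult_left_mono) (auto intro: add_increasing2)
    then show ?thesis using G unfolding K0_def \<psi>_def by linarith
  next
    case False
    have "\<bar>(pi - \<theta>) - \<psi>\<bar> = \<bar>\<theta> - (pi - \<psi>)\<bar>" by simp
    then have "exp (- (bb \<nu> / m) * \<bar>sin \<theta> - m\<bar>) \<le> exp (- (bb \<nu>/(4*m)) * \<bar>\<theta> - (pi - \<psi>)\<bar>)"
      using key[of "pi - \<theta>"] False assms by simp
    then have "K0 * exp (- (bb \<nu> / m) * \<bar>sin \<theta> - m\<bar>) \<le> K0 * (exp (- (bb \<nu>/(4*m)) * \<bar>\<theta> - \<psi>\<bar>) + exp (- (bb \<nu>/(4*m)) * \<bar>\<theta> - (pi - \<psi>)\<bar>))"
      using K0 by (intro mult_left_mono) (auto intro: add_increasing)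
    then show ?thesis using G unfolding K0_def \<psi>_def by linarith
  qed
qed

lemma exp_int:
  assumes "c > 0" "0 \<le> p" "p \<le> pi"
  shows "((\<lambda>\<theta>. exp (- c * \<bar>\<theta> - p\<bar>)) has_integral ((1 - exp (- c * p))/c + (1 - exp (- c * (pi - p)))/c)) {0..pi}"
proof -
  have i1: "((\<lambda>\<theta>. exp (- c * \<bar>\<theta> - p\<bar>)) has_integral ((1 - exp (- c * p))/c)) {0..p}"
  proof -
    have "((\<lambda>\<theta>. exp (c * (\<theta> - p))) has_integral (exp (c * (p - p)) / c - exp (c * (0 - p)) / c)) {0..p}"
      using assms
      by (intro fundamental_theorem_of_calculus[where f = "\<lambda>\<theta>. exp (c * (\<theta> - p)) / c"])
         (auto intro!: derivative_eq_intros simp: has_real_derivative_iff_has_vector_derivative[symmetric])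
    then have "((\<lambda>\<theta>. exp (c * (\<theta> - p))) has_integral ((1 - exp (- c * p))/c)) {0..p}"
      by (simp add: diff_divide_distrib)
    then show ?thesis
      by (rule has_integral_eq[rotated]) (auto simp: abs_if algebra_simps)
  qed
  have i2: "((\<lambda>\<theta>. exp (- c * \<bar>\<theta> - p\<bar>)) has_integral ((1 - exp (- c * (pi - p)))/c)) {p..pi}"
  proof -
    have "((\<lambda>\<theta>. exp (- c * (\<theta> - p))) has_integral (- exp (- c * (pi - p)) / c - (- exp (- c * (p - p)) / c))) {p..pi}"
      using assms
      by (intro fundamental_theorem_of_calculus[where f = "\<lambda>\<theta>. - exp (- c * (\<theta> - p)) / c"])
         (auto intro!: derivative_eq_intros simp: has_real_derivative_iff_has_vector_derivative[symmetric])
    then have "((\<lambda>\<theta>. exp (- c * (\<theta> - p))) has_integral ((1 - exp (- c * (pi - p)))/c)) {p..pi}"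
      by (simp add: diff_divide_distrib)
    then show ?thesis
      by (rule has_integral_eq[rotated]) (auto simp: abs_if algebra_simps)
  qed
  show ?thesis using has_integral_combine[OF assms(2,3) i1 i2] by simp
qed



lemma bb_pos: "\<nu> > 0 \<Longrightarrow> bb \<nu> > 0"
  unfolding bb_def by simp

lemma FF_bound:
  assumes "\<nu> > 0" "2*\<nu> \<le> k"
  shows "\<bar>FF \<nu> k\<bar> \<le> 16 * ((2*(\<nu>/k)) powr \<nu> * exp (1 - \<nu>)) * (\<nu>/k) / bb \<nu>"
proof -
  have k0: "k > 0" using assms by simp
  define m where "m = \<nu>/k"
  have m0: "m > 0" and m2: "m \<le> 1/2" unfolding m_def using assms k0 by (auto simp: field_simps)
  define K0 where "K0 = (2*m) powr \<nu> * exp (1 - \<nu>)"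
  have K0: "K0 \<ge> 0" unfolding K0_def by simp
  define c where "c = bb \<nu>/(4*m)"
  have c0: "c > 0" unfolding c_def using bb_pos[OF assms(1)] m0 by simp
  define \<psi> where "\<psi> = arcsin m"
  have psi: "0 \<le> \<psi>" "\<psi> \<le> pi" unfolding \<psi>_def using arcsin_small[of m] m0 m2 pi_gt_zero by auto
  define M where "M \<theta> = K0 * (exp (- c * \<bar>\<theta> - \<psi>\<bar>) + exp (- c * \<bar>\<theta> - (pi - \<psi>)\<bar>))" for \<theta>
  define I1 where "I1 = (1 - exp (- c * \<psi>))/c + (1 - exp (- c * (pi - \<psi>)))/c"
  define I2 where "I2 = (1 - exp (- c * (pi - \<psi>)))/c + (1 - exp (- c * (pi - (pi - \<psi>))))/c"
  have h1: "((\<lambda>\<theta>. exp (- c * \<bar>\<theta> - \<psi>\<bar>)) has_integral I1) {0..pi}"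
    unfolding I1_def using exp_int[OF c0 psi] .
  have h2: "((\<lambda>\<theta>. exp (- c * \<bar>\<theta> - (pi - \<psi>)\<bar>)) has_integral I2) {0..pi}"
    unfolding I2_def using exp_int[OF c0, of "pi - \<psi>"] psi by simp
  have hM: "(M has_integral K0 * (I1 + I2)) {0..pi}"
    unfolding M_def using has_integral_mult_right[OF has_integral_add[OF h1 h2], of K0] by simp
  have I1b: "I1 \<le> 2/c" unfolding I1_def using c0 by (simp add: field_simps)
  have I2b: "I2 \<le> 2/c" unfolding I2_def using c0 by (simp add: field_simps)
  have "\<bar>FF \<nu> k\<bar> \<le> integral {0..pi} M"
  proof (rule FF_contour[OF assms(1) k0])
    show "M integrable_on {0..pi}" using hM by blast
    fix \<theta> assume "\<theta> \<in> {0..pi}"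
    then show "(2 * sin \<theta>) powr \<nu> * exp (- k * sin \<theta>) \<le> M \<theta>"
      unfolding M_def K0_def c_def \<psi>_def m_def
      using M_bound[OF assms(1) k0, of \<theta>] m2 unfolding m_def by auto
  qed
  also have "integral {0..pi} M = K0 * (I1 + I2)" using hM by (rule integral_unique)
  also have "\<dots> \<le> K0 * (4/c)" using I1b I2b K0 by (intro mult_left_mono) auto
  also have "K0 * (4/c) = 16 * K0 * m / bb \<nu>" unfolding c_def using m0 bb_pos[OF assms(1)] by (simp add: field_simps)
  finally show ?thesis unfolding K0_def m_def .
qed

lemma FF_even: "FF \<nu> (-k) = FF \<nu> k"
  unfolding FF_def by simp

lemma beta_lower:
  assumes "a > 0"
  shows "Beta (1/2) (a+1) \<ge> 2 / (exp 1 * sqrt (a+1))"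
proof -
  define \<delta> where "\<delta> = 1 / sqrt (a+1)"
  have d0: "\<delta> > 0" unfolding \<delta>_def using assms by simp
  have d1: "\<delta> \<le> 1" unfolding \<delta>_def using assms by simp
  have dsq: "\<delta>\<^sup>2 = 1/(a+1)" unfolding \<delta>_def using assms by (simp add: power_divide)
  define C where "C = (1 - \<delta>\<^sup>2) powr a"
  have C: "C \<ge> exp (-1)"
  proof -
    have "1/(a+1) < 1" using assms by simp
    then have pos: "1 - \<delta>\<^sup>2 > 0" using dsq by linarith
    have E: "1 - \<delta>\<^sup>2 = a/(a+1)" using dsq assms by (simp add: field_simps)
    have E2: "1 + 1/a = (a+1)/a" using assms by (simp add: field_simps)
    have "ln (1 - \<delta>\<^sup>2) = ln a - ln (a+1)" unfolding E using assms by (simp add: ln_div)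
    moreover have "ln (1 + 1/a) = ln (a+1) - ln a" unfolding E2 using assms by (simp add: ln_div)
    ultimately have "ln (1 - \<delta>\<^sup>2) = - ln (1 + 1/a)" by simp
    moreover have "ln (1 + 1/a) \<le> 1/a" using assms by (intro ln_add_one_self_le_self) simp
    ultimately have "a * ln (1 - \<delta>\<^sup>2) \<ge> -1" using assms by (simp add: field_simps)
    then show ?thesis unfolding C_def powr_def using pos by (simp add: mult.commute)
  qed
  have int1: "integrable lborel (\<lambda>x. indicator {-1..1} x * (1 - x\<^sup>2) powr a :: real)"
  proof (rule Bochner_Integration.integrable_bound[OF integrable_ind_box])
    show "(\<lambda>x. indicator {-1..1} x * (1 - x\<^sup>2) powr a :: real) \<in> borel_measurable lborel" by measurable
    show "AE x in lborel. norm (indicator {-1..1} x * (1 - x\<^sup>2) powr a :: real) \<le> norm (indicator {-1..1} x :: real)"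
    proof (rule AE_I2)
      fix x :: real
      show "norm (indicator {-1..1} x * (1 - x\<^sup>2) powr a :: real) \<le> norm (indicator {-1..1} x :: real)"
      proof (cases "x \<in> {-1..1}")
        case True
        then have "0 \<le> 1 - x\<^sup>2" "1 - x\<^sup>2 \<le> 1" by (auto simp: abs_square_le_1 abs_le_iff)
        then have "(1 - x\<^sup>2) powr a \<le> 1" using assms by (simp add: powr_le1)
        then show ?thesis using True by simp
      qed simp
    qed
  qed
  have int2: "integrable lborel (\<lambda>x. indicator {-\<delta>..\<delta>} x * C :: real)"
    by (simp add: integrable_indicator_iff emeasure_lborel_Icc_eq)
  have "2 * \<delta> * C = (LBINT x. indicator {-\<delta>..\<delta>} x * C)"
    using d0 by (simp add: integral_mult_left_zero)
  also have "\<dots> \<le> (LBINT x. indicator {-1..1} x * (1 - x\<^sup>2) powr a)"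
  proof (rule integral_mono[OF int2 int1])
    fix x :: real
    show "indicator {-\<delta>..\<delta>} x * C \<le> indicator {-1..1} x * (1 - x\<^sup>2) powr a"
    proof (cases "x \<in> {-\<delta>..\<delta>}")
      case True
      then have "\<bar>x\<bar> \<le> \<delta>" by auto
      then have "\<bar>x\<bar>\<^sup>2 \<le> \<delta>\<^sup>2" by (intro power_mono) auto
      then have "x\<^sup>2 \<le> \<delta>\<^sup>2" by simp
      moreover have "\<delta>\<^sup>2 \<le> 1" using d0 d1 by (simp add: power_le_one)
      ultimately have "C \<le> (1 - x\<^sup>2) powr a" unfolding C_def
        using assms by (intro powr_mono2) auto
      moreover have "x \<in> {-1..1}" using True d1 by auto
      ultimately show ?thesis using True by simp
    qed (simp add: C_def)
  qed
  also have "\<dots> = Beta (1/2) (a+1)" by (rule J_int[OF assms])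
  finally have "2 * \<delta> * C \<le> Beta (1/2) (a+1)" .
  moreover have "2 * \<delta> * exp (-1) \<le> 2 * \<delta> * C" using C d0 by simp
  moreover have "2 * \<delta> * exp (-1) = 2 / (exp 1 * sqrt (a+1))" unfolding \<delta>_def by (simp add: exp_minus field_simps)
  ultimately show ?thesis by linarith
qed

lemma cst_bound:
  assumes "\<nu> > 0"
  shows "cst \<nu> \<le> exp 1 / 2 * sqrt (2*\<nu>+1)"
proof -
  have B: "Beta (1/2) (2*\<nu>+1) \<ge> 2 / (exp 1 * sqrt (2*\<nu>+1))" using beta_lower[of "2*\<nu>"] assms by simp
  have Bp: "2 / (exp 1 * sqrt (2*\<nu>+1)) > 0" using assms by simp
  have Bg: "Beta (1/2) (2*\<nu>+1) > 0" using B Bp by linarith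
  then have "cst \<nu> = 1 / Beta (1/2) (2*\<nu>+1)" using cst_Beta[OF assms] by (simp add: field_simps)
  also have "\<dots> \<le> 1 / (2 / (exp 1 * sqrt (2*\<nu>+1)))" using B Bp Bg by (intro divide_left_mono) auto
  also have "\<dots> = exp 1 / 2 * sqrt (2*\<nu>+1)" by simp
  finally show ?thesis .
qed



lemma scalar_ineq:
  assumes e: "\<epsilon> > 0" and nu: "\<epsilon> \<le> \<nu>"
  shows "16 * exp 1 ^ 3 * sqrt (2*\<nu>+1) * sqrt \<nu> / (bb \<nu>)\<^sup>2 \<le> 16 * exp 1 ^ 3 * sqrt (2 + 1/\<epsilon>) * (9 + 64/\<epsilon>)"
proof -
  have n0: "\<nu> > 0" using e nu by simp
  have b0: "bb \<nu> > 0" using bb_pos[OF n0] .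
  have s1: "sqrt (2*\<nu>+1) * sqrt \<nu> \<le> sqrt (2 + 1/\<epsilon>) * \<nu>"
  proof -
    have "1 \<le> \<nu> / \<epsilon>" using e nu by simp
    then have "\<nu> * 1 \<le> \<nu> * (\<nu>/\<epsilon>)" using n0 by (intro mult_left_mono) auto
    then have "\<nu> \<le> \<nu> * (\<nu>/\<epsilon>)" by simp
    then have "(2*\<nu>+1) * \<nu> \<le> (2 + 1/\<epsilon>) * \<nu>\<^sup>2" using e by (simp add: power2_eq_square field_simps)
    then have "sqrt ((2*\<nu>+1) * \<nu>) \<le> sqrt ((2 + 1/\<epsilon>) * \<nu>\<^sup>2)" by (rule real_sqrt_le_mono)
    then show ?thesis using n0 by (simp add: real_sqrt_mult)
  qed
  have s2: "\<nu> / (bb \<nu>)\<^sup>2 \<le> 9 + 64/\<epsilon>"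
  proof (cases "sqrt \<nu> / 3 \<le> \<nu> / 8")
    case True
    then have bbe: "bb \<nu> = sqrt \<nu> / 3" unfolding bb_def by simp
    have "(bb \<nu>)\<^sup>2 = (sqrt \<nu> / 3)\<^sup>2" by (simp only: bbe)
    also have "\<dots> = \<nu> / 9" using n0 by (simp add: power_divide)
    finally have bsq: "(bb \<nu>)\<^sup>2 = \<nu> / 9" .
    have "\<nu> / (bb \<nu>)\<^sup>2 = \<nu> / (\<nu> / 9)" by (simp only: bsq)
    also have "\<dots> = 9" using n0 by simp
    finally have "\<nu> / (bb \<nu>)\<^sup>2 = 9" .
    then show ?thesis using e by simp
  next
    case False
    then have bbe: "bb \<nu> = \<nu> / 8" unfolding bb_def by simp
    have "\<nu> / (bb \<nu>)\<^sup>2 = \<nu> / (\<nu> / 8)\<^sup>2" by (simp only: bbe)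
    also have "\<dots> = 64 / \<nu>" using n0 by (simp add: power2_eq_square field_simps)
    finally have "\<nu> / (bb \<nu>)\<^sup>2 = 64 / \<nu>" .
    also have "\<dots> \<le> 64 / \<epsilon>" using e nu by (intro divide_left_mono) auto
    finally show ?thesis by simp
  qed
  have "16 * exp 1 ^ 3 * sqrt (2*\<nu>+1) * sqrt \<nu> / (bb \<nu>)\<^sup>2 = 16 * exp 1 ^ 3 * (sqrt (2*\<nu>+1) * sqrt \<nu>) * (1 / (bb \<nu>)\<^sup>2)"
    by simp
  also have "\<dots> \<le> 16 * exp 1 ^ 3 * (sqrt (2 + 1/\<epsilon>) * \<nu>) * (1 / (bb \<nu>)\<^sup>2)"
    using s1 b0 by (intro mult_right_mono mult_left_mono) auto
  also have "\<dots> = 16 * exp 1 ^ 3 * sqrt (2 + 1/\<epsilon>) * (\<nu> / (bb \<nu>)\<^sup>2)" by simp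
  also have "\<dots> \<le> 16 * exp 1 ^ 3 * sqrt (2 + 1/\<epsilon>) * (9 + 64/\<epsilon>)"
    using s2 e by (intro mult_left_mono) (auto intro: add_nonneg_nonneg)
  finally show ?thesis .
qed

lemma main_bound:
  assumes e: "\<epsilon> > 0" and X: "X > 0" and nu: "\<epsilon> \<le> \<nu>" and nt: "\<nu> \<le> \<bar>X*t/4\<bar>"
  shows "\<bar>h_nu \<nu> X t\<bar> \<le> (16 * exp 1 ^ 3 * sqrt (2 + 1/\<epsilon>) * (9 + 64/\<epsilon>)) * \<nu> powr (-1/2) * exp (-2*\<nu>) * X * \<bar>4*\<nu>/(X*t)\<bar> powr (2*\<nu>+2)"
proof -
  define C where "C = 16 * exp 1 ^ 3 * sqrt (2 + 1/\<epsilon>) * (9 + 64/\<epsilon>)"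
  have n0: "\<nu> > 0" using e nu by simp
  have b0: "bb \<nu> > 0" using bb_pos[OF n0] .
  define k where "k = t*X/2"
  define K where "K = \<bar>k\<bar>"
  have "\<bar>X*t/4\<bar> = X * \<bar>t\<bar> / 4" using X by (simp add: abs_mult abs_divide)
  moreover have "K = X * \<bar>t\<bar> / 2" unfolding K_def k_def using X by (simp add: abs_mult abs_divide mult.commute)
  ultimately have K2: "2*\<nu> \<le> K" using nt by simp
  have K0: "K > 0" using K2 n0 by simp
  have FFK: "FF \<nu> k = FF \<nu> K" unfolding K_def
    by (cases "k \<ge> 0") (auto simp: FF_even[of \<nu> k, symmetric])
  define m where "m = \<nu>/K"
  have m0: "m > 0" unfolding m_def using n0 K0 by simp
  define A where "A = (2*m) powr \<nu>"
  have A0: "A \<ge> 0" unfolding A_def by simp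
  define B where "B = 16 * (A * exp (1 - \<nu>)) * m / bb \<nu>"
  have FFb: "\<bar>FF \<nu> k\<bar> \<le> B" unfolding FFK B_def A_def m_def by (rule FF_bound[OF n0 K2])
  have FF2: "(FF \<nu> k)\<^sup>2 \<le> B\<^sup>2"
  proof -
    have "\<bar>FF \<nu> k\<bar>\<^sup>2 \<le> B\<^sup>2" using FFb by (intro power_mono) auto
    then show ?thesis by simp
  qed
  have cb: "cst \<nu> \<le> exp 1 / 2 * sqrt (2*\<nu>+1)" by (rule cst_bound[OF n0])
  have c0: "cst \<nu> \<ge> 0" using cst_pos[OF n0] by simp
  have hh: "h_nu \<nu> X t = cst \<nu> * (X/2) * (FF \<nu> k)\<^sup>2" unfolding k_def by (rule h_formula[OF n0 X])
  have hpos: "h_nu \<nu> X t \<ge> 0" by (rule h_nonneg[OF n0 X])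
  define Q where "Q = exp (-2*\<nu>) * X * A\<^sup>2 * m\<^sup>2"
  have Q0: "Q \<ge> 0" unfolding Q_def using X by simp
  have "h_nu \<nu> X t \<le> (exp 1 / 2 * sqrt (2*\<nu>+1)) * (X/2) * B\<^sup>2"
    unfolding hh using cb c0 FF2 X by (intro mult_mono) auto
  also have "\<dots> = Q * (64 * exp 1 ^ 3 * sqrt (2*\<nu>+1) / (bb \<nu>)\<^sup>2)"
  proof -
    have "exp (1 - \<nu>) ^ 2 = exp 1 ^ 2 * exp (-2*\<nu>)"
      by (simp add: power2_eq_square mult_exp_exp)
    then show ?thesis unfolding B_def Q_def using b0
      by (simp add: power_mult_distrib power_divide field_simps power2_eq_square power3_eq_cube)
  qed
  also have "\<dots> \<le> Q * (4 * C / sqrt \<nu>)"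
  proof -
    have "16 * exp 1 ^ 3 * sqrt (2*\<nu>+1) * sqrt \<nu> / (bb \<nu>)\<^sup>2 \<le> C"
      unfolding C_def by (rule scalar_ineq[OF e nu])
    then have "64 * exp 1 ^ 3 * sqrt (2*\<nu>+1) / (bb \<nu>)\<^sup>2 \<le> 4 * C / sqrt \<nu>"
      using n0 b0 by (simp add: field_simps)
    then show ?thesis using Q0 by (intro mult_left_mono) auto
  qed
  also have "Q * (4 * C / sqrt \<nu>) = C * \<nu> powr (-1/2) * exp (-2*\<nu>) * X * \<bar>4*\<nu>/(X*t)\<bar> powr (2*\<nu>+2)"
  proof -
    have r1: "\<bar>4*\<nu>/(X*t)\<bar> = 2*m" unfolding m_def K_def k_def using X n0
      by (simp add: abs_mult abs_divide field_simps)
    have r2: "(2*m) powr (2*\<nu>+2) = A\<^sup>2 * (4 * m\<^sup>2)"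
    proof -
      have "(2*m) powr (2*\<nu>+2) = (2*m) powr \<nu> * (2*m) powr \<nu> * (2*m) powr 2"
        by (simp add: powr_add[symmetric])
      also have "(2*m) powr 2 = (2*m)\<^sup>2" using m0 by (simp add: powr_numeral)
      finally show ?thesis unfolding A_def by (simp add: power2_eq_square)
    qed
    have r3: "\<nu> powr (-1/2) = 1 / sqrt \<nu>"
      using n0 by (simp add: powr_minus_divide powr_half_sqrt)
    show ?thesis unfolding r1 r2 r3 Q_def by (simp add: field_simps)
  qed
  finally show ?thesis using hpos unfolding C_def by simp
qed

theorem lemmaA1:
  shows "(\<forall>\<nu>>0. \<forall>X>0.
            g_nu \<nu> X 0 = 1 \<and>
            (\<forall>x\<ge>0. x > X \<longrightarrow> g_nu \<nu> X x = 0) \<and>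
            (\<forall>t. h_nu \<nu> X t \<ge> 0))
       \<and> (\<forall>\<epsilon>>0. \<exists>C. \<forall>\<nu> X t::real. X > 0 \<and> \<epsilon> \<le> \<nu> \<and> \<nu> \<le> \<bar>X*t/4\<bar> \<longrightarrow>
            \<bar>h_nu \<nu> X t\<bar> \<le> C * \<nu> powr (-1/2) * exp (-2*\<nu>) * X * \<bar>4*\<nu>/(X*t)\<bar> powr (2*\<nu>+2))"
proof (intro conjI allI impI)
  fix \<nu> X :: real assume "\<nu> > 0" "X > 0"
  then show "g_nu \<nu> X 0 = 1" "\<And>x. x \<ge> 0 \<Longrightarrow> x > X \<Longrightarrow> g_nu \<nu> X x = 0" "\<And>t. h_nu \<nu> X t \<ge> 0"
    using g0 g_supp h_nonneg by auto
next
  fix \<epsilon> :: real assume "\<epsilon> > 0"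
  then show "\<exists>C. \<forall>\<nu> X t::real. X > 0 \<and> \<epsilon> \<le> \<nu> \<and> \<nu> \<le> \<bar>X*t/4\<bar> \<longrightarrow>
            \<bar>h_nu \<nu> X t\<bar> \<le> C * \<nu> powr (-1/2) * exp (-2*\<nu>) * X * \<bar>4*\<nu>/(X*t)\<bar> powr (2*\<nu>+2)"
    using main_bound by blast
qed

end
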